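(* Let $(\mathcal A,r)$ be a population game, $\mathcal G=(\mathcal H,\boldsymbol\eta,W)$ a connected community network, and $\mathbf f$ an imitation mechanism satisfying Assumption 1. Let $\mathcal Z\subseteq\mathcal X$ be the set of equilibrium points of the network imitation dynamics. Then $$\mathcal X^\bullet_{\boldsymbol\eta}\subseteq\mathcal Z\subseteq\mathcal X^\bullet.$$ Moreover: (i) if $f_{ij}(\mathbf y)>0$ for all $\mathbf y\in\mathcal Y$ and all $i,j\in\mathcal A$, then $\mathcal Z=\mathcal X^\bullet_{\boldsymbol\eta}$; (ii) if $f_{ij}(\mathbf y)=0$ for all $\mathbf y\in\mathcal Y$ and all $i,j\in\mathcal A$ with $r_i(\mathbf y)=r_j(\mathbf y)$, then $\mathcal Z=\mathcal X^\bullet$.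
   Context: Let $\mathcal A$ be a finite set of actions and $\mathcal Y=\{\mathbf y\in\mathbb R_+^{\mathcal A}:\mathbf 1^\top\mathbf y=1\}$. A population game $(\mathcal A,r)$ consists of reward functions $r_i:\mathcal Y\to\mathbb R$, $i\in\mathcal A$. A community network $\mathcal G=(\mathcal H,\boldsymbol\eta,W)$ consists of a finite set $\mathcal H$, a vector $\boldsymbol\eta\in\mathbb R^{\mathcal H}$ with $\eta_h>0$, $\sum_h\eta_h=1$, and a nonnegative matrix $W\in\mathbb R_+^{\mathcal H\times\mathcal H}$ with strictly positive diagonal; it is connected if $W$ is irreducible. System states: $\mathcal X=\{\mathbf x\in\mathbb R_+^{\mathcal A\times\mathcal H}:\mathbf 1^\top\mathbf x=\boldsymbol\eta^\top\}$, with population state $\mathbf y=\mathbf x\mathbf 1$. An imitation mechanism is a Lipschitz map $\mathbf f:\mathcal Y\to\mathbb R_+^{\mathcal A\times\mathcal A}$. The network imitation dynamics is $$\dot x_{ih}=\sum_{j\in\mathcal A}\sum_{k\in\mathcal H}\big(x_{jh}W_{hk}x_{ik}f_{ji}(\mathbf x\mathbf 1)-x_{ih}W_{hk}x_{jk}f_{ij}(\mathbf x\mathbf 1)\big).$$ Assumption 1: for all $i,j\in\mathcal A$ and $\mathbf y\in\mathcal Y$, $\operatorname{sgn}(f_{ij}(\mathbf y)-f_{ji}(\mathbf y))=\operatorname{sgn}(r_j(\mathbf y)-r_i(\mathbf y))$. Restricted Nash equilibria: $\mathcal Y^\bullet=\{\mathbf y\in\mathcal Y: y_i>0,\ y_j>0\Rightarrow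 r_i(\mathbf y)=r_j(\mathbf y)\}$; $\mathcal X^\bullet=\{\mathbf x\in\mathcal X:\mathbf x\mathbf 1\in\mathcal Y^\bullet\}$. A system state $\mathbf x$ is balanced if $\mathbf x=\mathbf x\mathbf 1\boldsymbol\eta^\top$, i.e. $x_{ih}=y_i\eta_h$ for all $i,h$ where $\mathbf y=\mathbf x\mathbf 1$. $\mathcal X^\bullet_{\boldsymbol\eta}$ denotes the set of balanced states in $\mathcal X^\bullet$. *)

theory Defs
  imports "HOL-Analysis.Analysis"
begin

text \<open>Actions are indexed by a finite type 'a, communities by a finite type 'h.
  A population state is a vector in real^'a, a system state an 'a x 'h matrix
  (x $ i $ h), an imitation mechanism is a map real^'a => real^'a^'a
  (f y $ i $ j = f_ij(y)), and rewards are r :: real^'a => real^'a (r y $ i = r_i(y)).\<close>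

definition pop_states :: "(real^'a::finite) set" where
  "pop_states = {y. (\<forall>i. 0 \<le> y $ i) \<and> (\<Sum>i\<in>UNIV. y $ i) = 1}"

definition sys_states :: "real^'h::finite \<Rightarrow> (real^'h^'a::finite) set" where
  "sys_states \<eta> = {x. (\<forall>i h. 0 \<le> x $ i $ h) \<and> (\<forall>h. (\<Sum>i\<in>UNIV. x $ i $ h) = \<eta> $ h)}"

definition pop_of :: "real^'h::finite^'a::finite \<Rightarrow> real^'a" where
  "pop_of x = x *v (\<chi> h. 1)"

definition community_network :: "real^'h::finite \<Rightarrow> real^'h^'h \<Rightarrow> bool" where
  "community_network \<eta> W \<longleftrightarrow>
     (\<forall>h. 0 < \<eta> $ h) \<and> (\<Sum>h\<in>UNIV. \<eta> $ h) = 1 \<and>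
     (\<forall>h k. 0 \<le> W $ h $ k) \<and> (\<forall>h. 0 < W $ h $ h)"

definition irreducible_mat :: "real^'h::finite^'h \<Rightarrow> bool" where
  "irreducible_mat W \<longleftrightarrow> (\<forall>h k. (h, k) \<in> {(a, b). 0 < W $ a $ b}\<^sup>+)"

definition imitation_mechanism :: "(real^'a::finite \<Rightarrow> real^'a^'a) \<Rightarrow> bool" where
  "imitation_mechanism f \<longleftrightarrow>
     (\<exists>L. L-lipschitz_on pop_states f) \<and> (\<forall>y\<in>pop_states. \<forall>i j. 0 \<le> f y $ i $ j)"

definition assumption1 :: "(real^'a::finite \<Rightarrow> real^'a) \<Rightarrow> (real^'a \<Rightarrow> real^'a^'a) \<Rightarrow> bool" where
  "assumption1 r f \<longleftrightarrow>
     (\<forall>y\<in>pop_states. \<forall>i j. sgn (f y $ i $ j - f y $ j $ i) = sgn (r y $ j - r y $ i))"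

definition net_imit_field ::
  "real^'h::finite^'h \<Rightarrow> (real^'a::finite \<Rightarrow> real^'a^'a) \<Rightarrow> real^'h^'a \<Rightarrow> real^'h^'a" where
  "net_imit_field W f x = (\<chi> i h. \<Sum>j\<in>UNIV. \<Sum>k\<in>UNIV.
      x $ j $ h * W $ h $ k * x $ i $ k * f (pop_of x) $ j $ i
      - x $ i $ h * W $ h $ k * x $ j $ k * f (pop_of x) $ i $ j)"

definition equilibria ::
  "real^'h::finite \<Rightarrow> real^'h^'h \<Rightarrow> (real^'a::finite \<Rightarrow> real^'a^'a) \<Rightarrow> (real^'h^'a) set" where
  "equilibria \<eta> W f = {x \<in> sys_states \<eta>. net_imit_field W f x = 0}"

definition restricted_nash_pop :: "(real^'a::finite \<Rightarrow> real^'a) \<Rightarrow> (real^'a) set" where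
  "restricted_nash_pop r = {y \<in> pop_states. \<forall>i j. 0 < y $ i \<and> 0 < y $ j \<longrightarrow> r y $ i = r y $ j}"

definition restricted_nash_sys ::
  "real^'h::finite \<Rightarrow> (real^'a::finite \<Rightarrow> real^'a) \<Rightarrow> (real^'h^'a) set" where
  "restricted_nash_sys \<eta> r = {x \<in> sys_states \<eta>. pop_of x \<in> restricted_nash_pop r}"

definition balanced :: "real^'h::finite \<Rightarrow> real^'h^'a::finite \<Rightarrow> bool" where
  "balanced \<eta> x \<longleftrightarrow> (\<forall>i h. x $ i $ h = pop_of x $ i * \<eta> $ h)"

definition restricted_nash_balanced ::
  "real^'h::finite \<Rightarrow> (real^'a::finite \<Rightarrow> real^'a) \<Rightarrow> (real^'h^'a) set" where
  "restricted_nash_balanced \<eta> r = {x \<in> restricted_nash_sys \<eta> r. balanced \<eta> x}"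

end

theory Submission
  imports Defs
begin

definition wv :: "real^'h::finite^'h \<Rightarrow> real^'h^'a::finite \<Rightarrow> 'a \<Rightarrow> 'h \<Rightarrow> real" where
  "wv W x i h = (\<Sum>k\<in>UNIV. W$h$k * x$i$k)"

lemma pop_of_nth: "pop_of x $ i = (\<Sum>h\<in>UNIV. x$i$h)"
  by (simp add: pop_of_def matrix_vector_mult_def)

lemma field_eq2:
  "net_imit_field W f x $ i $ h = (\<Sum>j\<in>UNIV. f (pop_of x)$j$i * x$j$h * wv W x i h - x$i$h * f (pop_of x)$i$j * wv W x j h)"
  unfolding net_imit_field_def wv_def
  by (simp add: sum_subtractf sum_distrib_left mult.commute mult.left_commute)

lemma field_eq:
  "net_imit_field W f x $ i $ h = (\<Sum>j\<in>UNIV. f (pop_of x)$j$i * x$j$h) * wv W x i h - x$i$h * (\<Sum>j\<in>UNIV. f (pop_of x)$i$j * wv W x j h)"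
  unfolding field_eq2 by (simp add: sum_subtractf sum_distrib_left sum_distrib_right mult.assoc)

lemma sys_nn: "x \<in> sys_states \<eta> \<Longrightarrow> 0 \<le> x$i$h"
  by (simp add: sys_states_def)

lemma sys_col: "x \<in> sys_states \<eta> \<Longrightarrow> (\<Sum>i\<in>UNIV. x$i$h) = \<eta>$h"
  by (simp add: sys_states_def)

lemma x_le_pop: "x \<in> sys_states \<eta> \<Longrightarrow> x$i$h \<le> pop_of x $ i"
  unfolding pop_of_nth by (rule member_le_sum) (auto simp: sys_nn)

lemma pop_zero: "x \<in> sys_states \<eta> \<Longrightarrow> pop_of x $ i = 0 \<Longrightarrow> x$i$h = 0"
  using x_le_pop[of x \<eta> i h] sys_nn[of x \<eta> i h] by simp

lemma pop_pos: "x \<in> sys_states \<eta> \<Longrightarrow> 0 < pop_of x $ i \<Longrightarrow> \<exists>h. 0 < x$i$h"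
  using sys_nn[of x \<eta> i] unfolding pop_of_nth
  by (metis (no_types, lifting) not_less sum_nonpos)

lemma pop_in: "community_network \<eta> W \<Longrightarrow> x \<in> sys_states \<eta> \<Longrightarrow> pop_of x \<in> pop_states"
  unfolding pop_states_def community_network_def
  apply (auto simp: pop_of_nth intro!: sum_nonneg sys_nn)
  apply (subst sum.swap)
  apply (simp add: sys_col)
  done

lemma wv_nn: "community_network \<eta> W \<Longrightarrow> x \<in> sys_states \<eta> \<Longrightarrow> 0 \<le> wv W x i h"
  unfolding wv_def community_network_def by (auto intro!: sum_nonneg mult_nonneg_nonneg simp: sys_nn)

lemma wv_ge: "community_network \<eta> W \<Longrightarrow> x \<in> sys_states \<eta> \<Longrightarrow> W$h$k * x$i$k \<le> wv W x i h"
  unfolding wv_def community_network_def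
  by (rule member_le_sum[where f="\<lambda>k. W$h$k * x$i$k"]) (auto intro!: mult_nonneg_nonneg simp: sys_nn)

lemma wv_pos: "community_network \<eta> W \<Longrightarrow> x \<in> sys_states \<eta> \<Longrightarrow> 0 < x$i$h \<Longrightarrow> 0 < wv W x i h"
  using wv_ge[of \<eta> W x h h i] unfolding community_network_def
  by (smt (verit) mult_pos_pos)

lemma wv_zero: "community_network \<eta> W \<Longrightarrow> x \<in> sys_states \<eta> \<Longrightarrow> pop_of x $ i = 0 \<Longrightarrow> wv W x i h = 0"
  unfolding wv_def by (simp add: pop_zero)

lemma sgn_pos_imp: "sgn (a::real) = sgn b \<Longrightarrow> 0 < b \<Longrightarrow> 0 < a"
  by (auto simp: sgn_if split: if_splits)
lemma sgn_nn_imp: "sgn (a::real) = sgn b \<Longrightarrow> 0 \<le> b \<Longrightarrow> 0 \<le> a"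
  by (auto simp: sgn_if split: if_splits)
lemma sgn_zero_imp: "sgn (a::real) = sgn b \<Longrightarrow> b = 0 \<Longrightarrow> a = 0"
  by (auto simp: sgn_if split: if_splits)

lemma trancl_back:
  assumes "(a, b) \<in> E\<^sup>+" "b \<in> G" "\<And>h k. (h, k) \<in> E \<Longrightarrow> k \<in> G \<Longrightarrow> h \<in> G"
  shows "a \<in> G"
  using assms(1,2)
proof (induction arbitrary: rule: trancl_induct)
  case (base y) then show ?case using assms(3) by blast
next
  case (step y z) then show ?case using assms(3) by blast
qed

lemma trancl_fwd:
  assumes "(a, b) \<in> E\<^sup>+" "a \<in> G" "\<And>h k. (h, k) \<in> E \<Longrightarrow> h \<in> G \<Longrightarrow> k \<in> G"
  shows "b \<in> G"
  using assms(1,2)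
proof (induction rule: trancl_induct)
  case (base y) then show ?case using assms(3) by blast
next
  case (step y z) then show ?case using assms(3) by blast
qed

lemma eq_nash:
  fixes x :: "real^'h::finite^'a::finite" and r :: "real^'a \<Rightarrow> real^'a"
  assumes cn: "community_network \<eta> W" and irr: "irreducible_mat W"
    and fnn: "\<And>i j. 0 \<le> f (pop_of x) $ i $ j"
    and a1: "\<And>i j. sgn (f (pop_of x)$i$j - f (pop_of x)$j$i) = sgn (r (pop_of x)$j - r (pop_of x)$i)"
    and xs: "x \<in> sys_states \<eta>" and eq: "net_imit_field W f x = 0"
  shows "pop_of x \<in> restricted_nash_pop r"
proof (rule ccontr)
  define F where "F = f (pop_of x)"
  define R where "R = r (pop_of x)"
  define y where "y = pop_of x"
  have Fnn: "\<And>i j. 0 \<le> F$i$j" using fnn by (simp add: F_def)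
  have a1': "\<And>i j. sgn (F$i$j - F$j$i) = sgn (R$j - R$i)" using a1 by (simp add: F_def R_def)
  have fe: "\<And>i h. (\<Sum>j\<in>UNIV. F$j$i * x$j$h) * wv W x i h = x$i$h * (\<Sum>j\<in>UNIV. F$i$j * wv W x j h)"
  proof -
    fix i h
    have "net_imit_field W f x $ i $ h = 0" using eq by simp
    then show "(\<Sum>j\<in>UNIV. F$j$i * x$j$h) * wv W x i h = x$i$h * (\<Sum>j\<in>UNIV. F$i$j * wv W x j h)"
      unfolding field_eq F_def by simp
  qed
  have xnn: "\<And>i h. 0 \<le> x$i$h" using xs by (rule sys_nn)
  have cnW: "\<And>h k. 0 \<le> W$h$k" "\<And>h. 0 < \<eta>$h" using cn by (auto simp: community_network_def)
  assume "pop_of x \<notin> restricted_nash_pop r"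
  then obtain a b where ab: "0 < y$a" "0 < y$b" "R$a \<noteq> R$b"
    using pop_in[OF cn xs] unfolding restricted_nash_pop_def y_def R_def by auto
  define P where "P = {l. 0 < y$l}"
  have Pfin: "finite ((\<lambda>l. R$l) ` P)" by simp
  have Pne: "(\<lambda>l. R$l) ` P \<noteq> {}" using ab by (auto simp: P_def)
  obtain j where jP: "j \<in> P" and jmin: "\<And>l. l \<in> P \<Longrightarrow> R$j \<le> R$l"
  proof -
    have "Min ((\<lambda>l. R$l) ` P) \<in> (\<lambda>l. R$l) ` P" using Min_in[OF Pfin Pne] .
    then obtain j where "j \<in> P" "R$j = Min ((\<lambda>l. R$l) ` P)" by auto
    moreover have "\<And>l. l \<in> P \<Longrightarrow> Min ((\<lambda>l. R$l) ` P) \<le> R$l" using Pfin by auto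
    ultimately show ?thesis using that by metis
  qed
  obtain i where iP: "0 < y$i" and ij: "R$j < R$i"
  proof -
    have "R$j \<le> R$a" "R$j \<le> R$b" using jmin ab by (auto simp: P_def)
    then show ?thesis using that ab by (cases "R$j < R$a") auto
  qed
  define G where "G = {h. \<exists>l. R$j < R$l \<and> 0 < x$l$h}"
  have Gne: "\<exists>g. g \<in> G"
    using pop_pos[OF xs iP[unfolded y_def]] ij by (auto simp: G_def)
  have Gclosed: "h \<in> G" if hk: "(h, k) \<in> {(a, b). 0 < W $ a $ b}" and kG: "k \<in> G" for h k
  proof (rule ccontr)
    assume hG: "h \<notin> G"
    from kG obtain l0 where l0: "R$j < R$l0" "0 < x$l0$k" by (auto simp: G_def)
    have xl0h: "x$l0$h = 0" using hG l0 xnn[of l0 h] by (auto simp: G_def)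
    have wpos: "0 < wv W x l0 h"
      proof -
      have "0 < W$h$k" using hk by simp
      then have "0 < W$h$k * x$l0$k" using l0 by simp
      then show ?thesis using wv_ge[OF cn xs, of h k l0] by linarith
    qed
    have "(\<Sum>l\<in>UNIV. F$l$l0 * x$l$h) * wv W x l0 h = 0" using fe[of l0 h] xl0h by simp
    then have s0: "(\<Sum>l\<in>UNIV. F$l$l0 * x$l$h) = 0" using wpos by simp
    have allz: "\<forall>l\<in>UNIV. F$l$l0 * x$l$h = 0"
      using s0 by (subst sum_nonneg_eq_0_iff[symmetric]) (auto simp: Fnn xnn)
    have "x$l$h = 0" for l
    proof (cases "R$j < R$l")
      case True
      have "\<not> (R$j < R$l \<and> 0 < x$l$h)" using hG unfolding G_def by blast
      then have "\<not> 0 < x$l$h" using True by blast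
      then show ?thesis using xnn[of l h] by linarith
    next
      case False
      then have "R$l < R$l0" using l0 by simp
      then have "0 < F$l$l0 - F$l0$l" using sgn_pos_imp[OF a1'[of l l0]] by simp
      then have "0 < F$l$l0" using Fnn[of l0 l] by simp
      then show ?thesis using allz by (metis UNIV_I less_irrefl mult_eq_0_iff)
    qed
    then have "(\<Sum>l\<in>UNIV. x$l$h) = 0" by simp
    then show False using sys_col[OF xs, of h] cnW(2)[of h] by simp
  qed
  have Gall: "\<And>h. h \<in> G"
  proof -
    fix h
    obtain g where g: "g \<in> G" using Gne by blast
    have "(h, g) \<in> {(a, b). 0 < W $ a $ b}\<^sup>+" using irr by (simp add: irreducible_mat_def)
    then show "h \<in> G" by (rule trancl_back[where G=G, OF _ g Gclosed])
  qed
  define Pj where "Pj = {h. 0 < x$j$h}"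
  define \<psi> where "\<psi> k = (\<Sum>l\<in>UNIV. F$j$l * x$l$k) / x$j$k" for k
  have Pjne: "\<psi> ` Pj \<noteq> {}" using pop_pos[OF xs, of j] jP by (auto simp: Pj_def P_def y_def)
  have Pjfin: "finite (\<psi> ` Pj)" by simp
  obtain h where hP: "h \<in> Pj" and hmin: "\<And>k. k \<in> Pj \<Longrightarrow> \<psi> h \<le> \<psi> k"
  proof -
    have "Min (\<psi> ` Pj) \<in> \<psi> ` Pj" using Min_in[OF Pjfin Pjne] .
    then obtain h where "h \<in> Pj" "\<psi> h = Min (\<psi> ` Pj)" by auto
    moreover have "\<And>l. l \<in> Pj \<Longrightarrow> Min (\<psi> ` Pj) \<le> \<psi> l" using Pjfin by auto
    ultimately show ?thesis using that by metis
  qed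
  have xjh: "0 < x$j$h" using hP by (simp add: Pj_def)
  have wjh: "0 < wv W x j h" using wv_pos[OF cn xs xjh] .
  have termk: "\<psi> h * x$j$k \<le> (\<Sum>l\<in>UNIV. F$j$l * x$l$k)" for k
  proof (cases "0 < x$j$k")
    case True
    then have "(\<Sum>l\<in>UNIV. F$j$l * x$l$k) = \<psi> k * x$j$k" by (simp add: \<psi>_def)
    moreover have "\<psi> h \<le> \<psi> k" using hmin True by (simp add: Pj_def)
    ultimately show ?thesis using True by (simp add: mult_right_mono)
  next
    case False
    then have "x$j$k = 0" using xnn[of j k] by simp
    then show ?thesis by (simp add: sum_nonneg Fnn xnn)
  qed
  have "(\<Sum>l\<in>UNIV. F$j$l * wv W x l h) = (\<Sum>k\<in>UNIV. W$h$k * (\<Sum>l\<in>UNIV. F$j$l * x$l$k))"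
    unfolding wv_def sum_distrib_left
    by (subst sum.swap) (simp add: mult_ac)
  also have "\<dots> \<ge> (\<Sum>k\<in>UNIV. W$h$k * (\<psi> h * x$j$k))"
    by (rule sum_mono) (simp add: mult_left_mono termk cnW(1))
  also have "(\<Sum>k\<in>UNIV. W$h$k * (\<psi> h * x$j$k)) = \<psi> h * wv W x j h"
    unfolding wv_def by (simp add: sum_distrib_left mult.commute mult.left_commute)
  finally have ge1: "\<psi> h * wv W x j h \<le> (\<Sum>l\<in>UNIV. F$j$l * wv W x l h)" .
  have "(\<Sum>l\<in>UNIV. F$j$l * x$l$h) * wv W x j h = x$j$h * (\<psi> h * wv W x j h)"
    using xjh by (simp add: \<psi>_def)
  also have "\<dots> \<le> x$j$h * (\<Sum>l\<in>UNIV. F$j$l * wv W x l h)"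
    using ge1 xjh by (simp add: mult_left_mono)
  also have "\<dots> = (\<Sum>l\<in>UNIV. F$l$j * x$l$h) * wv W x j h" using fe[of j h] by simp
  finally have BA: "(\<Sum>l\<in>UNIV. F$j$l * x$l$h) \<le> (\<Sum>l\<in>UNIV. F$l$j * x$l$h)"
    using wjh by simp
  obtain l0 where l0: "R$j < R$l0" "0 < x$l0$h" using Gall[of h] by (auto simp: G_def)
  have "(\<Sum>l\<in>UNIV. F$l$j * x$l$h) < (\<Sum>l\<in>UNIV. F$j$l * x$l$h)"
  proof (rule sum_strict_mono_ex1)
    show "finite (UNIV::'a set)" by simp
    show "\<forall>l\<in>UNIV. F$l$j * x$l$h \<le> F$j$l * x$l$h"
    proof
      fix l
      show "F$l$j * x$l$h \<le> F$j$l * x$l$h"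
      proof (cases "0 < x$l$h")
        case True
        then have "0 < y$l" using x_le_pop[OF xs, of l h] by (simp add: y_def)
        then have "R$j \<le> R$l" using jmin by (simp add: P_def)
        then have "0 \<le> F$j$l - F$l$j" using sgn_nn_imp[OF a1'[of j l]] by simp
        then show ?thesis using True by (simp add: mult_right_mono)
      next
        case False then have "x$l$h = 0" using xnn[of l h] by simp
        then show ?thesis by simp
      qed
    qed
    have "0 < F$j$l0 - F$l0$j" using sgn_pos_imp[OF a1'[of j l0]] l0 by simp
    then show "\<exists>l\<in>UNIV. F$l$j * x$l$h < F$j$l * x$l$h" using l0 by (intro bexI[of _ l0]) (auto intro: mult_strict_right_mono)
  qed
  with BA show False by simp
qed


lemma nash_D: "y \<in> restricted_nash_pop r \<Longrightarrow> 0 < y$i \<Longrightarrow> 0 < y$j \<Longrightarrow> r y$i = r y$j"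
  unfolding restricted_nash_pop_def by blast

lemma pop_nn: "x \<in> sys_states \<eta> \<Longrightarrow> 0 \<le> pop_of x $ i"
  unfolding pop_of_nth by (auto intro!: sum_nonneg simp: sys_nn)

lemma bal_eq:
  fixes x :: "real^'h::finite^'a::finite" and r :: "real^'a \<Rightarrow> real^'a"
  assumes xs: "x \<in> sys_states \<eta>" and nash: "pop_of x \<in> restricted_nash_pop r"
    and bal: "balanced \<eta> x"
    and a1: "\<And>i j. sgn (f (pop_of x)$i$j - f (pop_of x)$j$i) = sgn (r (pop_of x)$j - r (pop_of x)$i)"
  shows "net_imit_field W f x = 0"
proof -
  define F where "F = f (pop_of x)"
  define R where "R = r (pop_of x)"
  define y where "y = pop_of x"
  define c where "c h = (\<Sum>k\<in>UNIV. W$h$k * \<eta>$k)" for h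
  have xb: "\<And>l h. x$l$h = y$l * \<eta>$h" using bal by (simp add: balanced_def y_def)
  have wb: "\<And>l h. wv W x l h = y$l * c h"
    unfolding wv_def c_def xb by (simp add: sum_distrib_left mult_ac)
  have ynn: "\<And>l. 0 \<le> y$l" using pop_nn[OF xs] by (simp add: y_def)
  have Fs: "F$i$j = F$j$i" if "0 < y$i" "0 < y$j" for i j
  proof -
    have "R$i = R$j" using nash_D[OF nash, of i j] that unfolding R_def y_def by blast
    then show ?thesis using sgn_zero_imp[OF a1[of i j, folded F_def R_def]] by simp
  qed
  have term0: "F$j$i * x$j$h * wv W x i h - x$i$h * F$i$j * wv W x j h = 0" for i j h
  proof (cases "0 < y$i \<and> 0 < y$j")
    case True
    then show ?thesis using Fs[of i j] by (simp add: xb wb mult_ac)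
  next
    case False
    then have "y$i = 0 \<or> y$j = 0" using ynn[of i] ynn[of j] by linarith
    then show ?thesis by (auto simp: xb wb)
  qed
  show ?thesis
    unfolding vec_eq_iff by (simp add: field_eq2 term0[unfolded F_def])
qed

lemma nash_eq_ii:
  fixes x :: "real^'h::finite^'a::finite" and r :: "real^'a \<Rightarrow> real^'a"
  assumes xs: "x \<in> sys_states \<eta>" and nash: "pop_of x \<in> restricted_nash_pop r"
    and hz: "\<And>i j. r (pop_of x)$i = r (pop_of x)$j \<Longrightarrow> f (pop_of x)$i$j = 0"
  shows "net_imit_field W f x = 0"
proof -
  have xnn: "\<And>i h. 0 \<le> x$i$h" using xs by (rule sys_nn)
  have req: "r (pop_of x)$i = r (pop_of x)$j" if "0 < x$i$h" "0 < x$j$k" for i j h k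
  proof -
    have "0 < pop_of x $ i" "0 < pop_of x $ j"
      using that x_le_pop[OF xs, of i h] x_le_pop[OF xs, of j k] by auto
    then show ?thesis using nash_D[OF nash, of i j] by blast
  qed
  have t1: "x$j$h * W$h$k * x$i$k * f (pop_of x)$j$i = 0" for i j h k
  proof (cases "0 < x$j$h \<and> 0 < x$i$k")
    case True then show ?thesis using hz[OF req[of j h i k]] by simp
  next
    case False then have "x$j$h = 0 \<or> x$i$k = 0" using xnn[of j h] xnn[of i k] by linarith
    then show ?thesis by auto
  qed
  have t2: "x$i$h * W$h$k * x$j$k * f (pop_of x)$i$j = 0" for i j h k
  proof (cases "0 < x$i$h \<and> 0 < x$j$k")
    case True then show ?thesis using hz[OF req[of i h j k]] by simp
  next
    case False then have "x$i$h = 0 \<or> x$j$k = 0" using xnn[of i h] xnn[of j k] by linarith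
    then show ?thesis by auto
  qed
  show ?thesis unfolding vec_eq_iff net_imit_field_def by (simp add: t1 t2)
qed


lemma eq_balanced:
  fixes x :: "real^'h::finite^'a::finite" and r :: "real^'a \<Rightarrow> real^'a"
  assumes cn: "community_network \<eta> W" and irr: "irreducible_mat W"
    and fpos: "\<And>i j. 0 < f (pop_of x) $ i $ j"
    and a1: "\<And>i j. sgn (f (pop_of x)$i$j - f (pop_of x)$j$i) = sgn (r (pop_of x)$j - r (pop_of x)$i)"
    and xs: "x \<in> sys_states \<eta>" and eq: "net_imit_field W f x = 0"
    and nash: "pop_of x \<in> restricted_nash_pop r"
  shows "balanced \<eta> x"
proof -
  define F where "F = f (pop_of x)"
  define R where "R = r (pop_of x)"
  define y where "y = pop_of x"
  have Fp: "\<And>i j. 0 < F$i$j" using fpos by (simp add: F_def)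
  have xnn: "\<And>i h. 0 \<le> x$i$h" using xs by (rule sys_nn)
  have cnW: "\<And>h k. 0 \<le> W$h$k" "\<And>h. 0 < \<eta>$h" "\<And>h. 0 < W$h$h" "(\<Sum>h\<in>UNIV. \<eta>$h) = 1"
    using cn by (auto simp: community_network_def)
  have Fs: "F$i$j = F$j$i" if "0 < y$i" "0 < y$j" for i j
  proof -
    have "R$i = R$j" using nash_D[OF nash, of i j] that unfolding R_def y_def by blast
    then show ?thesis using sgn_zero_imp[OF a1[of i j, folded F_def R_def]] by simp
  qed
  have wpos_y: "0 < y$l" if "0 < wv W x l h" for l h
  proof (rule ccontr)
    assume "\<not> 0 < y$l"
    then have "y$l = 0" using pop_nn[OF xs, of l] by (simp add: y_def)
    then have "wv W x l h = 0" using wv_zero[OF cn xs] by (simp add: y_def)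
    then show False using that by simp
  qed
  have w0_x0: "x$l$h = 0" if "wv W x l h = 0" for l h
    using wv_pos[OF cn xs, of l h] that xnn[of l h] by linarith
  have fe2: "\<And>j h. (\<Sum>l\<in>UNIV. F$l$j * x$l$h * wv W x j h - x$j$h * F$j$l * wv W x l h) = 0"
  proof -
    fix j h
    have "net_imit_field W f x $ j $ h = 0" using eq by simp
    then show "(\<Sum>l\<in>UNIV. F$l$j * x$l$h * wv W x j h - x$j$h * F$j$l * wv W x l h) = 0"
      unfolding field_eq2 F_def by simp
  qed
  have sumw: "(\<Sum>l\<in>UNIV. wv W x l h) = (\<Sum>k\<in>UNIV. W$h$k * \<eta>$k)" for h
  proof -
    have "(\<Sum>l\<in>UNIV. wv W x l h) = (\<Sum>k\<in>UNIV. W$h$k * (\<Sum>l\<in>UNIV. x$l$k))"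
      unfolding wv_def sum_distrib_left by (subst sum.swap) simp
    also have "\<dots> = (\<Sum>k\<in>UNIV. W$h$k * \<eta>$k)" using sys_col[OF xs] by simp
    finally show ?thesis .
  qed
  have Spos: "0 < (\<Sum>k\<in>UNIV. W$h$k * \<eta>$k)" for h
  proof -
    have "W$h$h * \<eta>$h \<le> (\<Sum>k\<in>UNIV. W$h$k * \<eta>$k)"
      by (rule member_le_sum[where f="\<lambda>k. W$h$k * \<eta>$k"]) (auto intro: mult_nonneg_nonneg cnW less_imp_le)
    moreover have "0 < W$h$h * \<eta>$h" using cnW by simp
    ultimately show ?thesis by linarith
  qed
  have step: "\<exists>c. \<forall>l. x$l$h = c * wv W x l h" for h
  proof -
    define Q where "Q = {l. 0 < wv W x l h}"
    define \<rho> where "\<rho> l = x$l$h / wv W x l h" for l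
    have Qne: "Q \<noteq> {}"
    proof
      assume "Q = {}"
      then have "\<And>l. wv W x l h \<le> 0" by (auto simp: Q_def not_less)
      then have "(\<Sum>l\<in>UNIV. wv W x l h) \<le> 0" by (simp add: sum_nonpos)
      then show False using sumw[of h] Spos[of h] by linarith
    qed
    have Qfin: "finite (\<rho> ` Q)" by simp
    have Qne': "\<rho> ` Q \<noteq> {}" using Qne by simp
    obtain j where jQ: "j \<in> Q" and jmin: "\<And>l. l \<in> Q \<Longrightarrow> \<rho> j \<le> \<rho> l"
    proof -
      have "Min (\<rho> ` Q) \<in> \<rho> ` Q" using Min_in[OF Qfin Qne'] .
      then obtain j where "j \<in> Q" "\<rho> j = Min (\<rho> ` Q)" by auto
      moreover have "\<And>l. l \<in> Q \<Longrightarrow> Min (\<rho> ` Q) \<le> \<rho> l" using Qfin by auto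
      ultimately show ?thesis using that by metis
    qed
    have wj: "0 < wv W x j h" using jQ by (simp add: Q_def)
    have yj: "0 < y$j" using wpos_y[OF wj] .
    define T where "T l = F$l$j * x$l$h * wv W x j h - x$j$h * F$j$l * wv W x l h" for l
    have Tnn: "0 \<le> T l" for l
    proof (cases "0 < wv W x l h")
      case True
      have yl: "0 < y$l" using wpos_y[OF True] .
      have "\<rho> j \<le> \<rho> l" using jmin True by (simp add: Q_def)
      then have "x$j$h * wv W x l h \<le> x$l$h * wv W x j h"
        using wj True by (simp add: \<rho>_def divide_simps mult_ac)
      then have "F$j$l * (x$j$h * wv W x l h) \<le> F$j$l * (x$l$h * wv W x j h)"
        using Fp[of j l] by (simp add: mult_left_mono)
      then show ?thesis using Fs[OF yl yj] by (simp add: T_def mult_ac)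
    next
      case False
      then have "wv W x l h = 0" using wv_nn[OF cn xs, of l h] by linarith
      then show ?thesis using w0_x0[of l h] by (simp add: T_def)
    qed
    have "(\<Sum>l\<in>UNIV. T l) = 0" using fe2[of j h] by (simp add: T_def)
    then have T0: "\<And>l. T l = 0" using Tnn by (subst (asm) sum_nonneg_eq_0_iff) auto
    show ?thesis
    proof (intro exI allI)
      fix l
      show "x$l$h = \<rho> j * wv W x l h"
      proof (cases "0 < wv W x l h")
        case True
        have yl: "0 < y$l" using wpos_y[OF True] .
        have "F$j$l * (x$l$h * wv W x j h - x$j$h * wv W x l h) = 0"
          using T0[of l] Fs[OF yl yj] by (simp add: T_def algebra_simps)
        then have "x$l$h * wv W x j h = x$j$h * wv W x l h" using Fp[of j l] by simp
        then show ?thesis using wj by (simp add: \<rho>_def field_simps)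
      next
        case False
        then have "wv W x l h = 0" using wv_nn[OF cn xs, of l h] by linarith
        then show ?thesis using w0_x0[of l h] by simp
      qed
    qed
  qed
  then obtain c where c: "\<And>l h. x$l$h = c h * wv W x l h" by metis
  have etac: "\<eta>$h = c h * (\<Sum>k\<in>UNIV. W$h$k * \<eta>$k)" for h
  proof -
    have "\<eta>$h = (\<Sum>l\<in>UNIV. x$l$h)" using sys_col[OF xs] by simp
    also have "\<dots> = c h * (\<Sum>l\<in>UNIV. wv W x l h)" by (simp add: c sum_distrib_left)
    finally show ?thesis using sumw by simp
  qed
  have cpos: "0 < c h" for h
  proof -
    have "0 < c h * (\<Sum>k\<in>UNIV. W$h$k * \<eta>$k)" using etac[of h] cnW(2)[of h] by simp
    then show ?thesis using Spos[of h] by (simp add: zero_less_mult_iff)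
  qed
  show ?thesis unfolding balanced_def
  proof (intro allI)
    fix a h
    define \<tau> where "\<tau> k = x$a$k / \<eta>$k" for k
    have tfin: "finite (range \<tau>)" by simp
    obtain h0 where h0: "\<And>k. \<tau> h0 \<le> \<tau> k"
    proof -
      have "Min (range \<tau>) \<in> range \<tau>" using Min_in[OF tfin] by simp
      then obtain h0 where "\<tau> h0 = Min (range \<tau>)" by (metis rangeE)
      moreover have "\<And>k. Min (range \<tau>) \<le> \<tau> k" using tfin by simp
      ultimately show ?thesis using that by metis
    qed
    define t where "t = \<tau> h0"
    define z where "z k = x$a$k - t * \<eta>$k" for k
    have znn: "0 \<le> z k" for k
    proof -
      have "t \<le> x$a$k / \<eta>$k" using h0[of k] by (simp add: t_def \<tau>_def)
      then show ?thesis using cnW(2)[of k] by (simp add: z_def field_simps)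
    qed
    have zh0: "z h0 = 0" using cnW(2)[of h0] by (simp add: z_def t_def \<tau>_def)
    have zrec: "z k = c k * (\<Sum>m\<in>UNIV. W$k$m * z m)" for k
    proof -
      have "z k = c k * wv W x a k - t * (c k * (\<Sum>m\<in>UNIV. W$k$m * \<eta>$m))"
        using c[of a k] etac[of k] by (simp add: z_def)
      also have "\<dots> = c k * (\<Sum>m\<in>UNIV. W$k$m * z m)"
        unfolding wv_def z_def by (simp add: algebra_simps sum_subtractf sum_distrib_left)
      finally show ?thesis .
    qed
    have zclosed: "z m = 0" if "(k, m) \<in> {(a, b). 0 < W $ a $ b}" "z k = 0" for k m
    proof -
      have "c k * (\<Sum>m\<in>UNIV. W$k$m * z m) = 0" using zrec[of k] that(2) by simp
      then have s0: "(\<Sum>m\<in>UNIV. W$k$m * z m) = 0" using cpos[of k] by simp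
      have "\<forall>m\<in>UNIV. W$k$m * z m = 0"
        using s0 by (subst sum_nonneg_eq_0_iff[symmetric]) (auto intro: mult_nonneg_nonneg cnW znn)
      then have "W$k$m * z m = 0" by blast
      moreover have "0 < W$k$m" using that(1) by simp
      ultimately show ?thesis by simp
    qed
    have zall: "z k = 0" for k
    proof (cases "k = h0")
      case True then show ?thesis using zh0 by simp
    next
      case False
      have "(h0, k) \<in> {(a, b). 0 < W $ a $ b}\<^sup>+" using irr by (simp add: irreducible_mat_def)
      then have "k \<in> {m. z m = 0}"
        by (rule trancl_fwd[where G="{m. z m = 0}"]) (auto simp: zh0 zclosed)
      then show ?thesis by simp
    qed
    have xa: "x$a$k = t * \<eta>$k" for k using zall[of k] by (simp add: z_def)
    have "pop_of x $ a = t" unfolding pop_of_nth using cnW(4) by (simp add: xa sum_distrib_left[symmetric])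
    then show "x$a$h = pop_of x $ a * \<eta>$h" using xa by simp
  qed
qed


theorem theorem1:
  fixes r :: "real^'a::finite \<Rightarrow> real^'a"
    and \<eta> :: "real^'h::finite"
    and W :: "real^'h^'h"
    and f :: "real^'a \<Rightarrow> real^'a^'a"
  assumes "community_network \<eta> W"
    and "irreducible_mat W"
    and "imitation_mechanism f"
    and "assumption1 r f"
  shows "restricted_nash_balanced \<eta> r \<subseteq> equilibria \<eta> W f
       \<and> equilibria \<eta> W f \<subseteq> restricted_nash_sys \<eta> r
       \<and> ((\<forall>y\<in>pop_states. \<forall>i j. 0 < f y $ i $ j)
            \<longrightarrow> equilibria \<eta> W f = restricted_nash_balanced \<eta> r)
       \<and> ((\<forall>y\<in>pop_states. \<forall>i j. r y $ i = r y $ j \<longrightarrow> f y $ i $ j = 0)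
            \<longrightarrow> equilibria \<eta> W f = restricted_nash_sys \<eta> r)"
proof -
  note cn = assms(1) and irr = assms(2)
  have pin: "\<And>x::real^'h^'a. x \<in> sys_states \<eta> \<Longrightarrow> pop_of x \<in> pop_states"
    using pop_in[OF cn] by blast
  have fnn: "\<And>(x::real^'h^'a) i j. x \<in> sys_states \<eta> \<Longrightarrow> 0 \<le> f (pop_of x) $ i $ j"
    using assms(3) pin unfolding imitation_mechanism_def by blast
  have a1: "\<And>(x::real^'h^'a) i j. x \<in> sys_states \<eta> \<Longrightarrow>
      sgn (f (pop_of x)$i$j - f (pop_of x)$j$i) = sgn (r (pop_of x)$j - r (pop_of x)$i)"
    using assms(4) pin unfolding assumption1_def by blast
  have Z1: "restricted_nash_balanced \<eta> r \<subseteq> equilibria \<eta> W f"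
  proof
    fix x assume "x \<in> restricted_nash_balanced \<eta> r"
    then have xs: "x \<in> sys_states \<eta>" and n: "pop_of x \<in> restricted_nash_pop r" and b: "balanced \<eta> x"
      by (auto simp: restricted_nash_balanced_def restricted_nash_sys_def)
    have "net_imit_field W f x = 0" by (rule bal_eq[where f=f and W=W, OF xs n b a1[OF xs]])
    then show "x \<in> equilibria \<eta> W f" using xs by (simp add: equilibria_def)
  qed
  have Z2: "equilibria \<eta> W f \<subseteq> restricted_nash_sys \<eta> r"
  proof
    fix x assume "x \<in> equilibria \<eta> W f"
    then have xs: "x \<in> sys_states \<eta>" and e: "net_imit_field W f x = 0" by (auto simp: equilibria_def)
    have "pop_of x \<in> restricted_nash_pop r" by (rule eq_nash[where f=f and r=r, OF cn irr fnn[OF xs] a1[OF xs] xs e])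
    then show "x \<in> restricted_nash_sys \<eta> r" using xs by (simp add: restricted_nash_sys_def)
  qed
  have I: "equilibria \<eta> W f = restricted_nash_balanced \<eta> r" if pos: "\<forall>y\<in>pop_states. \<forall>i j. 0 < f y $ i $ j"
  proof
    show "equilibria \<eta> W f \<subseteq> restricted_nash_balanced \<eta> r"
    proof
      fix x assume xe: "x \<in> equilibria \<eta> W f"
      then have xs: "x \<in> sys_states \<eta>" and e: "net_imit_field W f x = 0" by (auto simp: equilibria_def)
      have xn: "x \<in> restricted_nash_sys \<eta> r" using Z2 xe by blast
      then have n: "pop_of x \<in> restricted_nash_pop r" by (simp add: restricted_nash_sys_def)
      have fp: "\<And>i j. 0 < f (pop_of x) $ i $ j" using pos pin[OF xs] by blast
      have "balanced \<eta> x" by (rule eq_balanced[where f=f and r=r, OF cn irr fp a1[OF xs] xs e n])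
      then show "x \<in> restricted_nash_balanced \<eta> r" using xn by (simp add: restricted_nash_balanced_def)
    qed
    show "restricted_nash_balanced \<eta> r \<subseteq> equilibria \<eta> W f" by (rule Z1)
  qed
  have II: "equilibria \<eta> W f = restricted_nash_sys \<eta> r"
    if hz: "\<forall>y\<in>pop_states. \<forall>i j. r y $ i = r y $ j \<longrightarrow> f y $ i $ j = 0"
  proof
    show "equilibria \<eta> W f \<subseteq> restricted_nash_sys \<eta> r" by (rule Z2)
    show "restricted_nash_sys \<eta> r \<subseteq> equilibria \<eta> W f"
    proof
      fix x assume "x \<in> restricted_nash_sys \<eta> r"
      then have xs: "x \<in> sys_states \<eta>" and n: "pop_of x \<in> restricted_nash_pop r"
        by (auto simp: restricted_nash_sys_def)
      have h: "\<And>i j. r (pop_of x)$i = r (pop_of x)$j \<Longrightarrow> f (pop_of x)$i$j = 0"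
        using hz pin[OF xs] by blast
      have "net_imit_field W f x = 0" by (rule nash_eq_ii[where f=f and r=r and W=W, OF xs n h])
      then show "x \<in> equilibria \<eta> W f" using xs by (simp add: equilibria_def)
    qed
  qed
  show ?thesis using Z1 Z2 I II by blast
qed

end
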